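(* Let $b\ge2$ be an integer and let $\psi:\mathbb{R}\to\mathbb{R}$ be a $\mathbb{Z}$-periodic $C^1$ function which is not cohomologous to zero and satisfies $\int_0^1\psi(x)\,dx=0$. Then there exist $\gamma_1\in(0,1)$ and a positive integer $N$ such that for every $\gamma\in(\gamma_1,1)$ (with $\gamma>1/b$), $E(N,x)\ne\mathcal{A}^N\times\mathcal{A}^N$ for every $x\in\mathbb{R}$, where $E$ is computed with this $\gamma$ and $\psi$.
   Context: A $\mathbb{Z}$-periodic continuous $\psi$ is cohomologous to $0$ if there is a continuous $\mathbb{Z}$-periodic $f$ with $\psi(x)=f(bx)-f(x)$ for all $x$. $\mathcal{A}=\{0,\dots,b-1\}$. $S(x,\mathbf{i})=\sum_{n\ge1}\gamma^{n-1}\psi\big(\frac{x+i_1+i_2b+\cdots+i_nb^{n-1}}{b^n}\big)$ for $\mathbf{i}\in\mathcal{A}^{\mathbb{Z}^+}$, $S'=\partial_xS$. Sequences $\mathbf{i},\mathbf{j}$ are $(\varepsilon,\delta)$-tangent at $x_0$ if $|S(x_0,\mathbf{i})-S(x_0,\mathbf{j})|\le\varepsilon$ and $|S'(x_0,\mathbf{i})-S'(x_0,\mathbf{j})|\le\delta$. $E(q,x_0;\varepsilon,\delta)$: pairs $(\mathbf{k},\mathbf{l})\in\mathcal{A}^q\times\mathcal{A}^q$ such that some concatenations $\mathbf{ku},\mathbf{lv}$ are $(\varepsilon,\delta)$-tangent at $x_0$; $E(q,x_0)=\bigcap_{\varepsilon,\delta>0}E(q,x_0;\varepsilon,\delta)$.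 *)

theory Defs
  imports "HOL-Analysis.Analysis"
begin

text \<open>Digit sequences \<open>i \<in> A^{Z^+}\<close> are functions \<open>nat \<Rightarrow> nat\<close> with values in
  \<open>{0..<b}\<close>; the paper's \<open>i_1, i_2, ...\<close> are \<open>i 0, i 1, ...\<close>.\<close>

definition digit_seq :: "nat \<Rightarrow> (nat \<Rightarrow> nat) \<Rightarrow> bool" where
  "digit_seq b i \<longleftrightarrow> (\<forall>n. i n < b)"

definition words :: "nat \<Rightarrow> nat \<Rightarrow> nat list set" where
  "words b q = {k. length k = q \<and> (\<forall>d\<in>set k. d < b)}"

definition concat_seq :: "nat list \<Rightarrow> (nat \<Rightarrow> nat) \<Rightarrow> nat \<Rightarrow> nat" where
  "concat_seq k u = (\<lambda>n. if n < length k then k ! n else u (n - length k))"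

text \<open>\<open>S(x,i) = \<Sum>_{n\<ge>1} \<gamma>^{n-1} \<psi>((x + i_1 + i_2 b + ... + i_n b^{n-1}) / b^n)\<close>,
  reindexed with \<open>m = n - 1\<close>.\<close>
definition S :: "nat \<Rightarrow> real \<Rightarrow> (real \<Rightarrow> real) \<Rightarrow> real \<Rightarrow> (nat \<Rightarrow> nat) \<Rightarrow> real" where
  "S b \<gamma> \<psi> x i = (\<Sum>m. \<gamma> ^ m * \<psi> ((x + (\<Sum>j\<le>m. real (i j) * real b ^ j)) / real b ^ (m + 1)))"

definition S' :: "nat \<Rightarrow> real \<Rightarrow> (real \<Rightarrow> real) \<Rightarrow> real \<Rightarrow> (nat \<Rightarrow> nat) \<Rightarrow> real" where
  "S' b \<gamma> \<psi> x i = deriv (\<lambda>y. S b \<gamma> \<psi> y i) x"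

definition tangent :: "nat \<Rightarrow> real \<Rightarrow> (real \<Rightarrow> real) \<Rightarrow> real \<Rightarrow> real \<Rightarrow> real \<Rightarrow>
    (nat \<Rightarrow> nat) \<Rightarrow> (nat \<Rightarrow> nat) \<Rightarrow> bool" where
  "tangent b \<gamma> \<psi> \<epsilon> \<delta> x0 i j \<longleftrightarrow>
     \<bar>S b \<gamma> \<psi> x0 i - S b \<gamma> \<psi> x0 j\<bar> \<le> \<epsilon> \<and> \<bar>S' b \<gamma> \<psi> x0 i - S' b \<gamma> \<psi> x0 j\<bar> \<le> \<delta>"

definition E_eps :: "nat \<Rightarrow> real \<Rightarrow> (real \<Rightarrow> real) \<Rightarrow> nat \<Rightarrow> real \<Rightarrow> real \<Rightarrow> real \<Rightarrow>
    (nat list \<times> nat list) set" where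
  "E_eps b \<gamma> \<psi> q x0 \<epsilon> \<delta> = {(k, l). k \<in> words b q \<and> l \<in> words b q \<and>
     (\<exists>u v. digit_seq b u \<and> digit_seq b v \<and>
        tangent b \<gamma> \<psi> \<epsilon> \<delta> x0 (concat_seq k u) (concat_seq l v))}"

definition E :: "nat \<Rightarrow> real \<Rightarrow> (real \<Rightarrow> real) \<Rightarrow> nat \<Rightarrow> real \<Rightarrow> (nat list \<times> nat list) set" where
  "E b \<gamma> \<psi> q x0 = (\<Inter>\<epsilon>\<in>{0<..}. \<Inter>\<delta>\<in>{0<..}. E_eps b \<gamma> \<psi> q x0 \<epsilon> \<delta>)"

definition cohomologous_to_zero :: "nat \<Rightarrow> (real \<Rightarrow> real) \<Rightarrow> bool" where
  "cohomologous_to_zero b \<psi> \<longleftrightarrow> (\<exists>f. continuous_on UNIV f \<and> (\<forall>x. f (x + 1) = f x) \<and>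
      (\<forall>x. \<psi> x = f (real b * x) - f x))"

end

theory Submission
  imports Defs
begin


lemma periodic_int:
  fixes g :: "real \<Rightarrow> 'a"
  assumes "\<And>x. g (x + 1) = g x"
  shows "g (x + real_of_int k) = g x"
proof -
  have pos: "g (x + real n) = g x" for x n
  proof (induction n arbitrary: x)
    case (Suc n)
    have "g (x + real (Suc n)) = g ((x + 1) + real n)" by (simp add: algebra_simps)
    also have "\<dots> = g x" using Suc assms by simp
    finally show ?case .
  qed simp
  show ?thesis
  proof (cases "k \<ge> 0")
    case True then show ?thesis using pos[of x "nat k"] by simp
  next
    case False
    have "g (x + real_of_int k) = g (x + real_of_int k + real (nat (-k)))" using pos by simp
    also have "\<dots> = g x" using False by simp
    finally show ?thesis .
  qed
qed

lemma periodic_bounded: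
  fixes g :: "real \<Rightarrow> real"
  assumes per: "\<And>x. g (x + 1) = g x" and c: "continuous_on UNIV g"
  shows "\<exists>M>0. \<forall>x. \<bar>g x\<bar> \<le> M"
proof -
  have "compact (g ` {0..1})" by (rule compact_continuous_image) (use c continuous_on_subset in auto)
  then obtain B where B: "\<forall>y\<in>g ` {0..1}. norm y \<le> B" by (meson compact_imp_bounded bounded_iff)
  have "\<bar>g x\<bar> \<le> max B 1" for x
  proof -
    have "g x = g ((x - of_int \<lfloor>x\<rfloor>) + of_int \<lfloor>x\<rfloor>)" by simp
    also have "\<dots> = g (x - of_int \<lfloor>x\<rfloor>)" by (rule periodic_int[of g, OF per])
    finally have "g x = g (x - of_int \<lfloor>x\<rfloor>)" .
    moreover have "x - of_int \<lfloor>x\<rfloor> \<in> {0..1}" unfolding atLeastAtMost_iff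
      using of_int_floor_le[of x] real_of_int_floor_add_one_gt[of x] by linarith
    ultimately have "\<bar>g x\<bar> \<le> B" using B by auto
    then show ?thesis by linarith
  qed
  then show ?thesis by (intro exI[of _ "max B 1"]) auto
qed

lemma periodic_unif_cont:
  fixes g :: "real \<Rightarrow> real"
  assumes per: "\<And>x. g (x + 1) = g x" and c: "continuous_on UNIV g" and e: "e > 0"
  shows "\<exists>d>0. \<forall>u v. \<bar>u - v\<bar> < d \<longrightarrow> \<bar>g u - g v\<bar> < e"
proof -
  have "uniformly_continuous_on {-1..2} g"
    by (rule compact_uniformly_continuous) (use c continuous_on_subset in auto)
  then obtain d where d: "d > 0" "\<And>u v. u \<in> {-1..2} \<Longrightarrow> v \<in> {-1..2} \<Longrightarrow> dist v u < d \<Longrightarrow> dist (g v) (g u) < e"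
    unfolding uniformly_continuous_on_def using e by metis
  show ?thesis
  proof (intro exI[of _ "min d 1"] conjI allI impI)
    fix u v :: real assume uv: "\<bar>u - v\<bar> < min d 1"
    define k where "k = \<lfloor>u\<rfloor>"
    have gu: "g u = g (u - of_int k)" using periodic_int[of g, OF per, of "u - of_int k" k] by simp
    have gv: "g v = g (v - of_int k)" using periodic_int[of g, OF per, of "v - of_int k" k] by simp
    have hu: "u - of_int k \<in> {-1..2}" unfolding k_def atLeastAtMost_iff
      using of_int_floor_le[of u] real_of_int_floor_add_one_gt[of u] by linarith
    have uv1: "\<bar>u - v\<bar> < 1" using uv by simp
    moreover have "v - of_int k \<in> {-1..2}" unfolding k_def atLeastAtMost_iff
      using of_int_floor_le[of u] real_of_int_floor_add_one_gt[of u] uv1 abs_less_iff[of "u-v" 1] by linarith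
    ultimately have "dist (g (v - of_int k)) (g (u - of_int k)) < e"
      using d(2)[OF hu] uv by (auto simp: dist_real_def)
    then show "\<bar>g u - g v\<bar> < e" using gu gv by (simp add: dist_real_def abs_minus_commute)
  qed (use d in auto)
qed


definition zz :: "nat \<Rightarrow> real \<Rightarrow> (nat \<Rightarrow> nat) \<Rightarrow> nat \<Rightarrow> real" where
  "zz b x i m = (x + (\<Sum>j\<le>m. real (i j) * real b ^ j)) / real b ^ (m + 1)"

definition Pg :: "nat \<Rightarrow> real \<Rightarrow> (real \<Rightarrow> real) \<Rightarrow> real \<Rightarrow> (nat \<Rightarrow> nat) \<Rightarrow> real" where
  "Pg b \<gamma> g x i = (\<Sum>m. \<gamma> ^ m * g (zz b x i m) / real b ^ (m + 1))"

lemma geo_b: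
  assumes "b \<ge> (2::nat)"
  shows "summable (\<lambda>m. (1 / real b) ^ (m + 1))" "(\<Sum>m. (1 / real b) ^ (m + 1)) = 1 / (real b - 1)"
proof -
  have n: "norm (1 / real b) < 1" using assms by auto
  have s: "summable (\<lambda>m. (1 / real b) ^ m)" using summable_geometric[OF n] .
  then show "summable (\<lambda>m. (1 / real b) ^ (m + 1))" by (simp add: summable_mult)
  have "(\<Sum>m. (1 / real b) ^ (m + 1)) = (\<Sum>m. (1 / real b) * (1 / real b) ^ m)" by simp
  also have "\<dots> = (1 / real b) * (1 / (1 - 1 / real b))"
    by (subst suminf_mult[OF s]) (simp add: suminf_geometric[OF n])
  also have "\<dots> = 1 / (real b - 1)" using assms by (simp add: field_simps)
  finally show "(\<Sum>m. (1 / real b) ^ (m + 1)) = 1 / (real b - 1)" .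
qed

lemma bound_series:
  fixes f :: "nat \<Rightarrow> real"
  assumes b: "b \<ge> (2::nat)" and f: "\<And>m. \<bar>f m\<bar> \<le> C * (1 / real b) ^ (m + 1)"
  shows "summable f" "\<bar>suminf f\<bar> \<le> C / (real b - 1)"
proof -
  have s: "summable (\<lambda>m. C * (1 / real b) ^ (m + 1))" using geo_b(1)[OF b] by (rule summable_mult)
  show "summable f" by (rule summable_comparison_test[OF _ s]) (use f in auto)
  have "norm (suminf f) \<le> (\<Sum>m. C * (1 / real b) ^ (m + 1))"
    by (rule norm_suminf_le[OF _ s]) (use f in auto)
  also have "\<dots> = C / (real b - 1)" using suminf_mult[OF geo_b(1)[OF b], of C] geo_b(2)[OF b] by simp
  finally show "\<bar>suminf f\<bar> \<le> C / (real b - 1)" by simp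
qed

lemma zz_Suc:
  assumes "b > 0"
  shows "zz b x i (Suc m) = zz b ((x + real (i 0)) / real b) (\<lambda>n. i (Suc n)) m"
proof -
  have "(\<Sum>j\<le>Suc m. real (i j) * real b ^ j) = real (i 0) + real b * (\<Sum>j\<le>m. real (i (Suc j)) * real b ^ j)"
    by (subst sum.atMost_Suc_shift) (simp add: sum_distrib_left algebra_simps)
  then show ?thesis using assms unfolding zz_def by (simp add: field_simps)
qed

lemma zz_0: "zz b x i 0 = (x + real (i 0)) / real b"
  by (simp add: zz_def)

lemma zz_prefix:
  assumes "\<And>j. j < N \<Longrightarrow> p j = q j" "m < N"
  shows "zz b x p m = zz b x q m"
  unfolding zz_def using assms by (intro arg_cong2[where f="(/)"] arg_cong2[where f="(+)"] refl sum.cong) auto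

lemma zz_diff: "zz b y i m - zz b x i m = (y - x) / real b ^ (m + 1)"
  unfolding zz_def by (simp add: diff_divide_distrib[symmetric])

locale wctx =
  fixes b :: nat and \<psi> :: "real \<Rightarrow> real"
  assumes b2: "b \<ge> 2" and per: "\<And>x. \<psi> (x + 1) = \<psi> x" and dif: "\<And>x. \<psi> differentiable at x"
    and cd: "continuous_on UNIV (deriv \<psi>)"
begin

abbreviation d where "d \<equiv> deriv \<psi>"
abbreviation P where "P \<gamma> x i \<equiv> Pg b \<gamma> d x i"

lemma bpos: "real b > 0" using b2 by simp

lemma psi_deriv: "(\<psi> has_real_derivative d x) (at x)"
  using dif DERIV_deriv_iff_real_differentiable by blast

lemma dper: "d (x + 1) = d x"
proof -
  have "((\<lambda>t. \<psi> (t + 1)) has_real_derivative d (x + 1) * 1) (at x)"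
    by (rule DERIV_chain2[OF psi_deriv]) (auto intro!: derivative_eq_intros)
  then have "(\<psi> has_real_derivative d (x + 1)) (at x)" using per by simp
  then show ?thesis using psi_deriv DERIV_unique by blast
qed

lemma psi_cont: "continuous_on UNIV \<psi>"
  by (rule differentiable_imp_continuous_on) (simp add: differentiable_on_def dif)

definition M0 where "M0 = (SOME M. M > 0 \<and> (\<forall>x. \<bar>\<psi> x\<bar> \<le> M))"
definition M1 where "M1 = (SOME M. M > 0 \<and> (\<forall>x. \<bar>d x\<bar> \<le> M))"

lemma M0: "M0 > 0" "\<bar>\<psi> x\<bar> \<le> M0"
  using someI_ex[OF periodic_bounded[of \<psi>, OF per psi_cont]] unfolding M0_def by auto

lemma M1: "M1 > 0" "\<bar>d x\<bar> \<le> M1"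
  using someI_ex[OF periodic_bounded[of d, OF dper cd]] unfolding M1_def by auto

lemma term_bound:
  assumes "0 \<le> \<gamma>" "\<gamma> \<le> 1"
  shows "\<bar>\<gamma> ^ m * d (zz b x i m) / real b ^ (m + 1)\<bar> \<le> M1 * (1 / real b) ^ (m + 1)"
proof -
  have "\<bar>\<gamma> ^ m\<bar> \<le> 1" using assms by (simp add: power_le_one)
  then have "\<bar>\<gamma> ^ m * d (zz b x i m)\<bar> \<le> 1 * M1"
    unfolding abs_mult by (intro mult_mono M1) auto
  then show ?thesis using bpos by (simp add: power_divide divide_right_mono)
qed

lemma P_summable:
  assumes "0 \<le> \<gamma>" "\<gamma> \<le> 1"
  shows "summable (\<lambda>m. \<gamma> ^ m * d (zz b x i m) / real b ^ (m + 1))"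
  using bound_series(1)[OF b2 term_bound[OF assms]] .

lemma P_rec:
  assumes "0 \<le> \<gamma>" "\<gamma> \<le> 1"
  shows "P \<gamma> x i = (d ((x + real (i 0)) / real b) + \<gamma> * P \<gamma> ((x + real (i 0)) / real b) (\<lambda>n. i (Suc n))) / real b"
proof -
  define y where "y = (x + real (i 0)) / real b"
  define t where "t = (\<lambda>m. \<gamma> ^ m * d (zz b x i m) / real b ^ (m + 1))"
  define t' where "t' = (\<lambda>m. \<gamma> ^ m * d (zz b y (\<lambda>n. i (Suc n)) m) / real b ^ (m + 1))"
  have st: "summable t" unfolding t_def by (rule P_summable[OF assms])
  have st': "summable t'" unfolding t'_def by (rule P_summable[OF assms])
  have ts: "t (Suc m) = (\<gamma> / real b) * t' m" for m
    unfolding t_def t'_def y_def using bpos by (simp add: zz_Suc field_simps)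
  have "(\<Sum>m. t (Suc m)) = suminf t - t 0" by (rule suminf_split_head[OF st])
  moreover have "(\<Sum>m. t (Suc m)) = (\<gamma> / real b) * suminf t'" unfolding ts by (rule suminf_mult[OF st'])
  moreover have "t 0 = d y / real b" unfolding t_def y_def by (simp add: zz_0)
  ultimately have "suminf t = d y / real b + (\<gamma> / real b) * suminf t'" by simp
  moreover have "P \<gamma> x i = suminf t" unfolding Pg_def t_def ..
  moreover have "P \<gamma> y (\<lambda>n. i (Suc n)) = suminf t'" unfolding Pg_def t'_def ..
  ultimately show ?thesis unfolding y_def[symmetric] using bpos by (simp add: field_simps)
qed

end




context wctx begin

lemma div_bm1: assumes "C \<ge> 0" shows "C / (real b - 1) \<le> C"
proof -
  have "C / (real b - 1) \<le> C / 1" using b2 assms by (intro divide_left_mono) auto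
  then show ?thesis by simp
qed

lemma P_prefix:
  assumes g: "0 \<le> \<gamma>" "\<gamma> \<le> 1" and pq: "\<And>j. j < N \<Longrightarrow> p j = q j"
  shows "\<bar>P \<gamma> x p - P \<gamma> x q\<bar> \<le> 2 * M1 / real b ^ N"
proof -
  define \<delta> where "\<delta> m = \<gamma> ^ m * d (zz b x p m) / real b ^ (m + 1) - \<gamma> ^ m * d (zz b x q m) / real b ^ (m + 1)" for m
  have sd: "summable \<delta>" unfolding \<delta>_def by (intro summable_diff P_summable g)
  have e: "P \<gamma> x p - P \<gamma> x q = suminf \<delta>" unfolding Pg_def \<delta>_def by (rule suminf_diff[OF P_summable[OF g] P_summable[OF g]])
  have z: "m < N \<Longrightarrow> \<delta> m = 0" for m unfolding \<delta>_def using zz_prefix[of N p q m b x] pq by simp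
  have s2: "suminf \<delta> = (\<Sum>m. \<delta> (m + N))" using suminf_split_initial_segment[OF sd, of N] z by simp
  have bnd: "\<bar>\<delta> (m + N)\<bar> \<le> (2 * M1 / real b ^ N) * (1 / real b) ^ (m + 1)" for m
  proof -
    have "\<bar>\<delta> (m + N)\<bar> \<le> M1 * (1 / real b) ^ (m + N + 1) + M1 * (1 / real b) ^ (m + N + 1)"
      unfolding \<delta>_def using term_bound[OF g, of "m + N" x p] term_bound[OF g, of "m + N" x q] by linarith
    also have "\<dots> = (2 * M1 / real b ^ N) * (1 / real b) ^ (m + 1)"
      using bpos by (simp add: power_add field_simps)
    finally show ?thesis .
  qed
  have "\<bar>\<Sum>m. \<delta> (m + N)\<bar> \<le> (2 * M1 / real b ^ N) / (real b - 1)" by (rule bound_series(2)[OF b2 bnd])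
  also have "\<dots> \<le> 2 * M1 / real b ^ N" by (rule div_bm1) (use M1 bpos in auto)
  finally show ?thesis using e s2 by simp
qed

lemma P_gamma:
  assumes g: "0 \<le> \<gamma>" "\<gamma> \<le> 1"
  shows "\<bar>P \<gamma> x i - P 1 x i\<bar> \<le> M1 * (1 - \<gamma>)"
proof -
  define \<delta> where "\<delta> m = 1 ^ m * d (zz b x i m) / real b ^ (m + 1) - \<gamma> ^ m * d (zz b x i m) / real b ^ (m + 1)" for m
  have e: "P 1 x i - P \<gamma> x i = suminf \<delta>" unfolding Pg_def \<delta>_def
    by (rule suminf_diff[OF P_summable P_summable]) (use g in auto)
  define gg where "gg m = M1 * ((1 / real b) ^ (m + 1)) - M1 * ((1 / real b) * (\<gamma> / real b) ^ m)" for m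
  have n1: "norm (\<gamma> / real b) < 1" using g b2 by auto
  have s1: "summable (\<lambda>m. M1 * ((1 / real b) ^ (m + 1)))" by (intro summable_mult geo_b(1)[OF b2])
  have s2': "summable (\<lambda>m. (\<gamma> / real b) ^ m)" by (rule summable_geometric[OF n1])
  have s2: "summable (\<lambda>m. M1 * ((1 / real b) * (\<gamma> / real b) ^ m))" by (intro summable_mult s2')
  have sg: "summable gg" unfolding gg_def by (rule summable_diff[OF s1 s2])
  have bnd: "norm (\<delta> m) \<le> gg m" for m
  proof -
    have "\<gamma> ^ m \<le> 1" using g by (simp add: power_le_one)
    have "\<delta> m = (1 - \<gamma> ^ m) * (d (zz b x i m) / real b ^ (m + 1))"
      unfolding \<delta>_def by (simp add: left_diff_distrib diff_divide_distrib)
    then have "norm (\<delta> m) = (1 - \<gamma> ^ m) * \<bar>d (zz b x i m)\<bar> * (1 / real b) ^ (m + 1)"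
      using \<open>\<gamma> ^ m \<le> 1\<close> bpos by (simp add: abs_mult power_divide)
    also have "\<dots> \<le> (1 - \<gamma> ^ m) * M1 * (1 / real b) ^ (m + 1)"
      using \<open>\<gamma> ^ m \<le> 1\<close> bpos M1(2)[of "zz b x i m"] by (intro mult_right_mono mult_left_mono) auto
    also have "\<dots> = gg m"
    proof -
      have h: "(1 / real b) * (\<gamma> / real b) ^ m = \<gamma> ^ m * (1 / real b) ^ (m + 1)"
        using bpos by (simp add: power_divide field_simps)
      show ?thesis unfolding gg_def h by (simp add: left_diff_distrib right_diff_distrib mult_ac diff_divide_distrib)
    qed
    finally show ?thesis .
  qed
  have "norm (suminf \<delta>) \<le> suminf gg" by (rule norm_suminf_le[OF bnd sg])
  also have "suminf gg = (\<Sum>m. M1 * ((1 / real b) ^ (m + 1))) - (\<Sum>m. M1 * ((1 / real b) * (\<gamma> / real b) ^ m))"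
    unfolding gg_def by (rule suminf_diff[OF s1 s2, symmetric])
  also have "(\<Sum>m. M1 * ((1 / real b) ^ (m + 1))) = M1 * (1 / (real b - 1))"
    using suminf_mult[OF geo_b(1)[OF b2], of M1] geo_b(2)[OF b2] by simp
  also have "(\<Sum>m. M1 * ((1 / real b) * (\<gamma> / real b) ^ m)) = M1 * ((1 / real b) * (1 / (1 - \<gamma> / real b)))"
    using suminf_mult[OF summable_mult[OF s2'], of M1 "1 / real b"] suminf_mult[OF s2', of "1 / real b"]
      suminf_geometric[OF n1] by simp
  also have "M1 * (1 / (real b - 1)) - M1 * ((1 / real b) * (1 / (1 - \<gamma> / real b))) = M1 * ((1 - \<gamma>) / ((real b - 1) * (real b - \<gamma>)))"
  proof -
    have p1: "real b - 1 > 0" "real b - \<gamma> > 0" using b2 g by auto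
    have e1: "(1 / real b) * (1 / (1 - \<gamma> / real b)) = 1 / (real b - \<gamma>)"
      using bpos p1 by (simp add: field_simps)
    have e2: "1 / (real b - 1) - 1 / (real b - \<gamma>) = (1 - \<gamma>) / ((real b - 1) * (real b - \<gamma>))"
      using p1 by (simp add: field_simps)
    have "M1 * (1 / (real b - 1)) - M1 * ((1 / real b) * (1 / (1 - \<gamma> / real b)))
        = M1 * (1 / (real b - 1) - 1 / (real b - \<gamma>))" by (simp only: e1 right_diff_distrib)
    then show ?thesis by (simp only: e2)
  qed
  also have "\<dots> \<le> M1 * (1 - \<gamma>)"
  proof -
    have "(real b - 1) * (real b - \<gamma>) \<ge> 1 * 1" using b2 g by (intro mult_mono) auto
    then have "(1 - \<gamma>) / ((real b - 1) * (real b - \<gamma>)) \<le> (1 - \<gamma>)"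
      using g by (simp add: divide_le_eq mult_le_cancel_left1)
    then show ?thesis using M1 by (intro mult_left_mono) auto
  qed
  finally show ?thesis using e by (simp add: abs_minus_commute)
qed

lemma P_cont:
  assumes g: "0 \<le> \<gamma>" "\<gamma> \<le> 1" and uc: "\<And>u v. \<bar>u - v\<bar> < \<delta>0 \<Longrightarrow> \<bar>d u - d v\<bar> \<le> e"
    and yx: "\<bar>y - x\<bar> < \<delta>0"
  shows "\<bar>P \<gamma> y i - P \<gamma> x i\<bar> \<le> e"
proof -
  have e0: "e \<ge> 0" using uc[of x x] yx by simp
  define \<delta> where "\<delta> m = \<gamma> ^ m * d (zz b y i m) / real b ^ (m + 1) - \<gamma> ^ m * d (zz b x i m) / real b ^ (m + 1)" for m
  have e: "P \<gamma> y i - P \<gamma> x i = suminf \<delta>" unfolding Pg_def \<delta>_def by (rule suminf_diff[OF P_summable[OF g] P_summable[OF g]])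
  have bnd: "\<bar>\<delta> m\<bar> \<le> e * (1 / real b) ^ (m + 1)" for m
  proof -
    have "1 \<le> real b" using b2 by simp
    from one_le_power[OF this, of "m + 1"] have b1: "real b ^ (m + 1) \<ge> 1" .
    have "\<bar>zz b y i m - zz b x i m\<bar> = \<bar>y - x\<bar> / real b ^ (m + 1)" by (simp add: zz_diff)
    also have "\<dots> \<le> \<bar>y - x\<bar>" using b1 by (simp add: divide_le_eq mult_le_cancel_left1)
    finally have "\<bar>d (zz b y i m) - d (zz b x i m)\<bar> \<le> e" using uc yx by simp
    moreover have "\<bar>\<gamma> ^ m\<bar> \<le> 1" using g by (simp add: power_le_one)
    ultimately have "\<bar>\<gamma> ^ m * (d (zz b y i m) - d (zz b x i m))\<bar> \<le> 1 * e"
      unfolding abs_mult by (intro mult_mono) auto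
    moreover have "\<delta> m = \<gamma> ^ m * (d (zz b y i m) - d (zz b x i m)) * (1 / real b) ^ (m + 1)"
      unfolding \<delta>_def using bpos by (simp add: field_simps power_divide)
    moreover have "\<bar>(1 / real b) ^ (m + 1)\<bar> = (1 / real b) ^ (m + 1)" using bpos by simp
    ultimately have "\<bar>\<delta> m\<bar> \<le> (1 * e) * (1 / real b) ^ (m + 1)"
      by (simp only: abs_mult) (intro mult_right_mono, auto)
    then show ?thesis by simp
  qed
  have "\<bar>suminf \<delta>\<bar> \<le> e / (real b - 1)" by (rule bound_series(2)[OF b2 bnd])
  also have "\<dots> \<le> e" by (rule div_bm1[OF e0])
  finally show ?thesis using e by simp
qed

lemma S_deriv:
  assumes g: "0 \<le> \<gamma>" "\<gamma> < 1"
  shows "((\<lambda>y. S b \<gamma> \<psi> y i) has_real_derivative P \<gamma> x i) (at x)"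
proof -
  define f where "f m y = \<gamma> ^ m * \<psi> (zz b y i m)" for m y
  define f' where "f' m y = \<gamma> ^ m * d (zz b y i m) / real b ^ (m + 1)" for m y
  have der: "(f m has_field_derivative f' m y) (at y within UNIV)" for m y
  proof -
    have "((\<lambda>y. zz b y i m) has_real_derivative 1 / real b ^ (m + 1)) (at y)"
      unfolding zz_def using bpos by (auto intro!: derivative_eq_intros)
    from DERIV_chain2[OF psi_deriv this]
    have "((\<lambda>y. \<psi> (zz b y i m)) has_real_derivative d (zz b y i m) * (1 / real b ^ (m + 1))) (at y)" .
    from DERIV_cmult[OF this, of "\<gamma> ^ m"] show ?thesis unfolding f_def f'_def by simp
  qed
  have uc: "uniformly_convergent_on UNIV (\<lambda>n x. \<Sum>i<n. f' i x)"
    by (rule Weierstrass_m_test'[OF _ geo_b(1)[OF b2, THEN summable_mult, of M1]])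
       (use term_bound g in \<open>auto simp: f'_def\<close>)
  have sm: "summable (\<lambda>m. f m 0)"
  proof (rule summable_comparison_test[OF _ summable_mult[OF summable_geometric[of \<gamma>], of M0]])
    show "\<exists>N. \<forall>n\<ge>N. norm (f n 0) \<le> M0 * \<gamma> ^ n"
    proof (intro exI[of _ 0] allI impI)
      fix n :: nat
      show "norm (f n 0) \<le> M0 * \<gamma> ^ n"
        using mult_left_mono[OF M0(2)[of "zz b 0 i n"], of "\<gamma> ^ n"] g
        by (simp add: f_def abs_mult mult.commute)
    qed
  qed (use g in auto)
  have "((\<lambda>x. \<Sum>n. f n x) has_field_derivative (\<Sum>n. f' n x)) (at x)"
    by (rule has_field_derivative_series'(2)[OF convex_UNIV der uc _ sm]) auto
  moreover have "(\<lambda>x. \<Sum>n. f n x) = (\<lambda>y. S b \<gamma> \<psi> y i)" unfolding f_def S_def zz_def by simp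
  moreover have "(\<Sum>n. f' n x) = P \<gamma> x i" unfolding f'_def Pg_def ..
  ultimately show ?thesis by simp
qed

lemma S'_eq:
  assumes "0 \<le> \<gamma>" "\<gamma> < 1"
  shows "S' b \<gamma> \<psi> x i = P \<gamma> x i"
  unfolding S'_def using S_deriv[OF assms] by (rule DERIV_imp_deriv)

end





definition A_int :: "nat \<Rightarrow> (nat \<Rightarrow> nat) \<Rightarrow> nat \<Rightarrow> int" where
  "A_int b i m = (\<Sum>t\<le>m. int (i t) * int b ^ t)"

definition sh :: "nat \<Rightarrow> int \<Rightarrow> (nat \<Rightarrow> nat) \<Rightarrow> nat \<Rightarrow> nat" where
  "sh b n i j = nat (((A_int b i j + n) div int b ^ j) mod int b)"

lemma sh_lt: "b > 0 \<Longrightarrow> sh b n i j < b"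
  unfolding sh_def by (simp add: nat_less_iff)

lemma sh_sum:
  assumes "b > 0"
  shows "(\<Sum>j\<le>m. int (sh b n i j) * int b ^ j) = (A_int b i m + n) mod int b ^ (m + 1)"
proof (induction m)
  case 0
  then show ?case using assms by (simp add: sh_def A_int_def)
next
  case (Suc m)
  define X where "X = A_int b i (Suc m) + n"
  define B where "B = int b ^ (m + 1)"
  have B0: "B > 0" using assms unfolding B_def by simp
  have XA: "X = (A_int b i m + n) + int (i (Suc m)) * B"
    unfolding X_def B_def A_int_def by simp
  have m1: "X mod B = (A_int b i m + n) mod B" unfolding XA by simp
  have "X mod (B * int b) = B * (X div B mod int b) + X mod B"
    by (rule zmod_zmult2_eq) (use assms in simp)
  moreover have "int (sh b n i (Suc m)) = X div B mod int b"
    unfolding sh_def X_def B_def using assms by simp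
  ultimately have "(\<Sum>j\<le>Suc m. int (sh b n i j) * int b ^ j) = X mod (B * int b)"
    using Suc m1 unfolding B_def by (simp add: mult.commute)
  moreover have "B * int b = int b ^ (Suc m + 1)" unfolding B_def by simp
  ultimately show ?case unfolding X_def by simp
qed

lemma real_sum_A: "(\<Sum>j\<le>m. real (i j) * real b ^ j) = real_of_int (A_int b i m)"
  unfolding A_int_def by simp

lemma zz_shift_int:
  assumes "b > 0"
  shows "\<exists>k::int. zz b (x + real_of_int n) i m = zz b x (sh b n i) m + real_of_int k"
proof -
  define B where "B = int b ^ (m + 1)"
  define Y where "Y = A_int b i m + n"
  have B0: "B > 0" using assms unfolding B_def by simp
  have s: "(\<Sum>j\<le>m. real (sh b n i j) * real b ^ j) = real_of_int (Y mod B)"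
    using arg_cong[OF sh_sum[OF assms, where m=m and n=n and i=i], of real_of_int] unfolding Y_def B_def by simp
  have "Y = (Y div B) * B + Y mod B" by simp
  then have r: "real_of_int (Y mod B) = real_of_int Y - real_of_int (Y div B) * real_of_int B"
    by (metis add_diff_cancel_left' of_int_add of_int_mult)
  have rB: "real_of_int B = real b ^ (m + 1)" unfolding B_def by simp
  have s': "real_of_int (A_int b (sh b n i) m) = real_of_int (Y mod B)" using s real_sum_A by metis
  have "zz b (x + real_of_int n) i m = zz b x (sh b n i) m + real_of_int (Y div B)"
    unfolding zz_def real_sum_A s' r using B0 unfolding rB[symmetric] Y_def
    by (simp add: field_simps)
  then show ?thesis by blast
qed


lemma int_stretch:
  fixes F :: "real \<Rightarrow> real"
  assumes per: "\<And>x. F (x + 1) = F x" and cont: "continuous_on UNIV F" and k: "k \<ge> (1::nat)"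
  shows "integral {0..1} (\<lambda>y. F (real k * y)) = integral {0..1} F"
proof -
  define I where "I = integral {0..1} F"
  have hI: "(F has_integral I) {0..1}" unfolding I_def
    by (rule integrable_integral, rule integrable_continuous_interval) (use cont continuous_on_subset in auto)
  have shift: "(F has_integral I) {real n..real n + 1}" for n :: nat
  proof -
    have aff: "((\<lambda>x. F (1 *\<^sub>R x + real n)) has_integral (I /\<^sub>R 1 ^ DIM(real)))
             (cbox ((real n - real n) /\<^sub>R 1) ((real n + 1 - real n) /\<^sub>R 1))
         \<longleftrightarrow> (F has_integral I) (cbox (real n) (real n + 1))"
      by (rule has_integral_affinity_iff) simp
    have pt: "F x = F (1 *\<^sub>R x + real n)" for x
      using periodic_int[of F, OF per, of x "int n"] by simp
    have h1: "((\<lambda>x. F (1 *\<^sub>R x + real n)) has_integral I) {0..1}"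
      by (rule has_integral_eq[OF _ hI]) (rule pt)
    have c: "cbox ((real n - real n) /\<^sub>R 1) ((real n + 1 - real n) /\<^sub>R 1) = {0..1::real}"
      by (simp add: cbox_interval)
    have i1: "I /\<^sub>R 1 ^ DIM(real) = I" by simp
    have "(F has_integral I) (cbox (real n) (real n + 1))"
      using aff h1 unfolding c i1 by simp
    then show ?thesis by (simp add: cbox_interval)
  qed
  have sum: "(F has_integral (real n * I)) {0..real n}" for n :: nat
  proof (induction n)
    case 0
    then show ?case using has_integral_refl(1)[of F "0::real"] by (simp add: cbox_interval)
  next
    case (Suc n)
    have "(F has_integral (real n * I + I)) {0..real n + 1}"
      by (rule has_integral_combine[OF _ _ Suc shift]) auto
    then show ?case by (simp add: algebra_simps)
  qed
  have kpos: "real k > 0" using k by simp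
  have aff: "((\<lambda>x. F (real k *\<^sub>R x + 0)) has_integral ((real k * I) /\<^sub>R real k ^ DIM(real)))
           (cbox ((0 - 0) /\<^sub>R real k) ((real k - 0) /\<^sub>R real k))
         \<longleftrightarrow> (F has_integral (real k * I)) (cbox 0 (real k))"
    by (rule has_integral_affinity_iff) (use kpos in simp)
  have e: "(\<lambda>x. F (real k *\<^sub>R x + 0)) = (\<lambda>y. F (real k * y))" by simp
  have c: "cbox ((0 - 0) /\<^sub>R real k) ((real k - 0) /\<^sub>R real k) = {0..1::real}"
    using kpos by (simp add: cbox_interval)
  have i1: "(real k * I) /\<^sub>R real k ^ DIM(real) = I" using kpos by simp
  have "(F has_integral (real k * I)) (cbox 0 (real k))" using sum[of k] by (simp add: cbox_interval)
  then have "((\<lambda>y. F (real k * y)) has_integral I) {0..1}"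
    using aff unfolding e c i1 by simp
  then show ?thesis unfolding I_def by (rule integral_unique)
qed



context wctx begin

lemma P_int: "P \<gamma> (x + real_of_int n) i = P \<gamma> x (sh b n i)"
proof -
  have "d (zz b (x + real_of_int n) i m) = d (zz b x (sh b n i) m)" for m
  proof -
    obtain k where "zz b (x + real_of_int n) i m = zz b x (sh b n i) m + real_of_int k"
      using zz_shift_int[of b x n i m] b2 by auto
    then show ?thesis using periodic_int[of d, OF dper] by simp
  qed
  then show ?thesis unfolding Pg_def by simp
qed

lemma sh_digit: "digit_seq b (sh b n i)"
  unfolding digit_seq_def using sh_lt b2 by auto

lemma prop1:
  assumes g: "0 < \<gamma>" "\<gamma> \<le> 1"
    and H: "\<And>p q. digit_seq b p \<Longrightarrow> digit_seq b q \<Longrightarrow> \<bar>P \<gamma> x p - P \<gamma> x q\<bar> \<le> c"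
    and a: "a < b" and p: "digit_seq b p" and q: "digit_seq b q"
  shows "\<bar>P \<gamma> ((x + real a) / real b) p - P \<gamma> ((x + real a) / real b) q\<bar> \<le> (real b / \<gamma>) * c"
proof -
  define ap where "ap = (\<lambda>n. if n = 0 then a else p (n - 1))"
  define aq where "aq = (\<lambda>n. if n = 0 then a else q (n - 1))"
  have dap: "digit_seq b ap" "digit_seq b aq" using p q a unfolding ap_def aq_def digit_seq_def by auto
  define y where "y = (x + real a) / real b"
  have rp: "P \<gamma> x ap = (d y + \<gamma> * P \<gamma> y p) / real b"
    using P_rec[of \<gamma> x ap] g unfolding y_def by (simp add: ap_def)
  have rq: "P \<gamma> x aq = (d y + \<gamma> * P \<gamma> y q) / real b"
    using P_rec[of \<gamma> x aq] g unfolding y_def by (simp add: aq_def)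
  have "P \<gamma> y p - P \<gamma> y q = (real b / \<gamma>) * (P \<gamma> x ap - P \<gamma> x aq)"
    unfolding rp rq using g bpos by (simp add: field_simps)
  then have "\<bar>P \<gamma> y p - P \<gamma> y q\<bar> = (real b / \<gamma>) * \<bar>P \<gamma> x ap - P \<gamma> x aq\<bar>"
    using g bpos by (simp add: abs_mult)
  also have "\<dots> \<le> (real b / \<gamma>) * c" using H[OF dap] g bpos by (intro mult_left_mono) auto
  finally show ?thesis unfolding y_def .
qed

lemma propM:
  assumes g: "0 < \<gamma>" "\<gamma> \<le> 1"
  shows "(\<And>p q. digit_seq b p \<Longrightarrow> digit_seq b q \<Longrightarrow> \<bar>P \<gamma> x p - P \<gamma> x q\<bar> \<le> c) \<Longrightarrow> A < b ^ M \<Longrightarrow>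
    digit_seq b p \<Longrightarrow> digit_seq b q \<Longrightarrow>
    \<bar>P \<gamma> ((x + real A) / real b ^ M) p - P \<gamma> ((x + real A) / real b ^ M) q\<bar> \<le> (real b / \<gamma>) ^ M * c"
proof (induction M arbitrary: x c A p q)
  case 0
  then show ?case by simp
next
  case (Suc M)
  define a where "a = A mod b"
  define A' where "A' = A div b"
  have a: "a < b" unfolding a_def using b2 by simp
  have A': "A' < b ^ M" unfolding A'_def using Suc.prems(2) b2
    by (simp add: div_less_iff_less_mult mult.commute)
  have AA: "real A = real a + real b * real A'" unfolding a_def A'_def
    by (metis of_nat_add of_nat_mult mod_div_mult_eq add.commute mult.commute)
  have pt: "(x + real A) / real b ^ Suc M = ((x + real a) / real b + real A') / real b ^ M"
    unfolding AA using bpos by (simp add: field_simps)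
  have H1: "\<And>p q. digit_seq b p \<Longrightarrow> digit_seq b q \<Longrightarrow>
      \<bar>P \<gamma> ((x + real a) / real b) p - P \<gamma> ((x + real a) / real b) q\<bar> \<le> (real b / \<gamma>) * c"
    by (rule prop1[OF g Suc.prems(1) a]) auto
  have "\<bar>P \<gamma> (((x + real a) / real b + real A') / real b ^ M) p - P \<gamma> (((x + real a) / real b + real A') / real b ^ M) q\<bar>
      \<le> (real b / \<gamma>) ^ M * ((real b / \<gamma>) * c)"
    by (rule Suc.IH[OF H1 A' Suc.prems(3,4)])
  then show ?case unfolding pt by (simp add: mult_ac)
qed

end




context wctx begin

lemma step1:
  assumes int0: "integral {0..1} \<psi> = 0" and nc: "\<not> cohomologous_to_zero b \<psi>"
  shows "\<exists>x0. P 1 x0 (\<lambda>n. if n = 0 then 1 else 0) \<noteq> P 1 x0 (\<lambda>_. 0)"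
proof (rule ccontr)
  define e1 :: "nat \<Rightarrow> nat" where "e1 = (\<lambda>n. if n = 0 then 1 else 0)"
  define z0 :: "nat \<Rightarrow> nat" where "z0 = (\<lambda>_. 0)"
  assume "\<not> (\<exists>x0. P 1 x0 (\<lambda>n. if n = 0 then 1 else 0) \<noteq> P 1 x0 (\<lambda>_. 0))"
  then have H: "P 1 y e1 = P 1 y z0" for y unfolding e1_def z0_def by blast
  have zz_z0: "zz b y z0 m = y / real b ^ (m + 1)" for y m by (simp add: zz_def z0_def)
  have s1: "(\<Sum>j\<le>m. real (e1 j) * real b ^ j) = 1" for m
    by (induction m) (auto simp: e1_def)
  have zz_e1: "zz b y e1 m = (y + 1) / real b ^ (m + 1)" for y m by (simp add: zz_def s1)
  define \<tau> where "\<tau> y = P 1 y z0" for y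
  have \<tau>per: "\<tau> (y + 1) = \<tau> y" for y
  proof -
    have "P 1 y e1 = P 1 (y + 1) z0" unfolding Pg_def zz_e1 zz_z0 ..
    then show ?thesis using H unfolding \<tau>_def by simp
  qed
  define f where "f m y = \<psi> (zz b y z0 m) - \<psi> 0" for m y
  define f' where "f' m y = 1 ^ m * d (zz b y z0 m) / real b ^ (m + 1)" for m y
  have der: "(f m has_field_derivative f' m y) (at y within UNIV)" for m y
  proof -
    have "((\<lambda>y. zz b y z0 m) has_real_derivative 1 / real b ^ (m + 1)) (at y)"
      unfolding zz_def using bpos by (auto intro!: derivative_eq_intros)
    from DERIV_chain2[OF psi_deriv this]
    have "((\<lambda>y. \<psi> (zz b y z0 m)) has_real_derivative d (zz b y z0 m) * (1 / real b ^ (m + 1))) (at y)" .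
    from DERIV_diff[OF this DERIV_const[of "\<psi> 0"]] show ?thesis unfolding f_def f'_def by simp
  qed
  have uc: "uniformly_convergent_on UNIV (\<lambda>n x. \<Sum>i<n. f' i x)"
    by (rule Weierstrass_m_test'[OF _ geo_b(1)[OF b2, THEN summable_mult, of M1]])
       (use term_bound[of 1] in \<open>auto simp: f'_def\<close>)
  have sm: "summable (\<lambda>m. f m 0)" unfolding f_def zz_z0 by simp
  define F where "F y = (\<Sum>m. f m y)" for y
  have Fd: "(F has_real_derivative \<tau> y) (at y)" for y
  proof -
    have "((\<lambda>x. \<Sum>n. f n x) has_field_derivative (\<Sum>n. f' n y)) (at y)"
      by (rule has_field_derivative_series'(2)[OF convex_UNIV der uc _ sm]) auto
    moreover have "(\<Sum>n. f' n y) = \<tau> y" unfolding f'_def \<tau>_def Pg_def ..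
    ultimately show ?thesis unfolding F_def[abs_def] by simp
  qed
  have Fs: "summable (\<lambda>m. f m y)" for y
    by (rule has_field_derivative_series'(1)[OF convex_UNIV der uc _ sm]) auto
  have Fb: "F (real b * y) = \<psi> y - \<psi> 0 + F y" for y
  proof -
    have "(\<Sum>m. f (Suc m) (real b * y)) = F (real b * y) - f 0 (real b * y)"
      unfolding F_def by (rule suminf_split_head[OF Fs])
    moreover have "f (Suc m) (real b * y) = f m y" for m
      unfolding f_def zz_z0 using bpos by (simp add: field_simps)
    moreover have "f 0 (real b * y) = \<psi> y - \<psi> 0" unfolding f_def zz_z0 using bpos by simp
    ultimately show ?thesis unfolding F_def by simp
  qed
  have Gd: "((\<lambda>y. F (y + 1) - F y) has_real_derivative 0) (at y)" for y
  proof -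
    have "((\<lambda>y. y + 1) has_real_derivative 1) (at y)" by (auto intro!: derivative_eq_intros)
    from DERIV_chain2[OF Fd this] have "((\<lambda>y. F (y + 1)) has_real_derivative \<tau> (y + 1) * 1) (at y)" .
    from DERIV_diff[OF this Fd] show ?thesis using \<tau>per by simp
  qed
  define lam where "lam = F 1 - F 0"
  have G: "F (y + 1) - F y = lam" for y
    using DERIV_isconst_all[of "\<lambda>y. F (y + 1) - F y" y 0] Gd unfolding lam_def by simp
  have Fn: "F (y + real n) = F y + real n * lam" for y n
  proof (induction n)
    case (Suc n)
    have "F (y + real (Suc n)) = F ((y + real n) + 1)" by (simp add: algebra_simps)
    also have "\<dots> = F (y + real n) + lam" using G[of "y + real n"] by simp
    finally show ?case using Suc by (simp add: algebra_simps)
  qed simp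
  have "F (real b * (0 + 1)) = \<psi> (0 + 1) - \<psi> 0 + F (0 + 1)" by (rule Fb)
  also have "\<dots> = F (real b * 0) + lam" using per[of 0] G[of 0] Fb[of 0] by simp
  finally have l1: "F (real b) = F 0 + lam" by simp
  have l2: "F (real b) = F 0 + real b * lam" using Fn[of 0 b] by simp
  have "(real b - 1) * lam = 0" using l1 l2 by (simp add: algebra_simps)
  then have lam0: "lam = 0" using b2 by simp
  have Fper: "F (y + 1) = F y" for y using G[of y] lam0 by simp
  have psiF: "\<psi> y = F (real b * y) - F y + \<psi> 0" for y using Fb[of y] by simp
  have Fcont: "continuous_on UNIV F"
    using Fd DERIV_continuous continuous_at_imp_continuous_on by blast
  have Fbcont: "continuous_on UNIV (\<lambda>y. F (real b * y))"
    by (rule continuous_on_compose2[OF Fcont]) (auto intro!: continuous_intros)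
  have i1: "(\<lambda>y. F (real b * y)) integrable_on {0..1}"
    by (rule integrable_continuous_interval) (use Fbcont continuous_on_subset in blast)
  have i2: "F integrable_on {0..1}"
    by (rule integrable_continuous_interval) (use Fcont continuous_on_subset in blast)
  have "integral {0..1} \<psi> = integral {0..1} (\<lambda>y. (F (real b * y) - F y) + \<psi> 0)"
    using psiF by (metis)
  also have "\<dots> = integral {0..1} (\<lambda>y. F (real b * y)) - integral {0..1} F + \<psi> 0"
  proof -
    have "integral {0..1} (\<lambda>y. (F (real b * y) - F y) + \<psi> 0)
        = integral {0..1} (\<lambda>y. F (real b * y) - F y) + integral {0..1} (\<lambda>y::real. \<psi> 0)"
      by (rule Henstock_Kurzweil_Integration.integral_add[OF integrable_diff[OF i1 i2] integrable_const_ivl])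
    also have "integral {0..1} (\<lambda>y. F (real b * y) - F y) = integral {0..1} (\<lambda>y. F (real b * y)) - integral {0..1} F"
      by (rule Henstock_Kurzweil_Integration.integral_diff[OF i1 i2])
    finally show ?thesis by simp
  qed
  also have "integral {0..1} (\<lambda>y. F (real b * y)) = integral {0..1} F"
    by (rule int_stretch[OF Fper Fcont]) (use b2 in simp)
  finally have p0: "\<psi> 0 = 0" using int0 by simp
  have psiF0: "\<psi> y = F (real b * y) - F y" for y using psiF[of y] p0 by linarith
  have "cohomologous_to_zero b \<psi>"
    unfolding cohomologous_to_zero_def by (rule exI[of _ F]) (use Fcont Fper psiF0 in blast)
  then show False using nc by simp
qed

end




lemma tri_gap:
  fixes a a' a'' b b' b'' c :: real
  assumes "\<bar>a - a'\<bar> < c / 16" "\<bar>b - b'\<bar> < c / 16" "\<bar>a' - a''\<bar> \<le> c / 16" "\<bar>b' - b''\<bar> \<le> c / 16"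
    "c = \<bar>a'' - b''\<bar>"
  shows "c / 2 < \<bar>a - b\<bar>"
  using assms unfolding abs_less_iff abs_le_iff abs_real_def by (auto split: if_splits)

context wctx begin

lemma main:
  assumes x0: "P 1 x0 (\<lambda>n. if n = 0 then 1 else 0) \<noteq> P 1 x0 (\<lambda>_. 0)"
  shows "\<exists>\<gamma>1 \<in> {0<..<1}. \<exists>N::nat. N > 0 \<and>
           (\<forall>\<gamma>. \<gamma>1 < \<gamma> \<and> \<gamma> < 1 \<and> \<gamma> > 1 / real b \<longrightarrow>
              (\<forall>x. E b \<gamma> \<psi> N x \<noteq> words b N \<times> words b N))"
proof -
  define e1 :: "nat \<Rightarrow> nat" where "e1 = (\<lambda>n. if n = 0 then 1 else 0)"
  define z0 :: "nat \<Rightarrow> nat" where "z0 = (\<lambda>_. 0)"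
  define c1 where "c1 = \<bar>P 1 x0 e1 - P 1 x0 z0\<bar>"
  have c1: "c1 > 0" using x0 unfolding c1_def e1_def z0_def by simp
  obtain du where du: "du > 0" and ucs: "\<And>u v. \<bar>u - v\<bar> < du \<Longrightarrow> \<bar>d u - d v\<bar> < c1 / 16"
    using periodic_unif_cont[of d, OF dper cd, of "c1 / 16"] c1 by auto
  have uc: "\<And>u v. \<bar>u - v\<bar> < du \<Longrightarrow> \<bar>d u - d v\<bar> \<le> c1 / 16" using ucs less_imp_le by blast
  define \<gamma>1 where "\<gamma>1 = max (1 / 2) (1 - c1 / (16 * M1))"
  have g1: "\<gamma>1 \<in> {0<..<1}" unfolding \<gamma>1_def using c1 M1(1) by auto
  have b1: "1 / real b < 1" using b2 by simp
  obtain M where M: "(1 / real b) ^ M < du" using real_arch_pow_inv[OF du b1] by blast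
  define c2 where "c2 = (c1 / 2) / (2 * real b) ^ M"
  have c2: "c2 > 0" unfolding c2_def using c1 bpos by simp
  have "c2 / (8 * M1) > 0" using c2 M1(1) by simp
  then obtain N0 where N0: "(1 / real b) ^ N0 < c2 / (8 * M1)" using real_arch_pow_inv[OF _ b1] by blast
  define N where "N = Suc N0"
  have Npos: "N > 0" unfolding N_def by simp
  have NB: "2 * M1 / real b ^ N < c2 / 4"
  proof -
    have "(1 / real b) ^ N \<le> (1 / real b) ^ N0" unfolding N_def using bpos b1
      by (intro power_decreasing) auto
    then have "(1 / real b) ^ N < c2 / (8 * M1)" using N0 by simp
    then have "2 * M1 * (1 / real b) ^ N < 2 * M1 * (c2 / (8 * M1))" using M1(1) by (intro mult_strict_left_mono) auto
    also have "\<dots> = c2 / 4" using M1(1) by simp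
    finally show ?thesis by (simp add: power_divide)
  qed
  show ?thesis
  proof (intro bexI[OF _ g1] exI[of _ N] conjI Npos allI impI)
    fix \<gamma> x
    assume gg: "\<gamma>1 < \<gamma> \<and> \<gamma> < 1 \<and> \<gamma> > 1 / real b"
    have g0: "0 \<le> \<gamma>" "\<gamma> < 1" "\<gamma> \<le> 1" "0 < \<gamma>" and ghalf: "\<gamma> > 1 / 2"
      using gg g1 unfolding \<gamma>1_def by auto
    have gclose: "M1 * (1 - \<gamma>) < c1 / 16"
    proof -
      have "1 - \<gamma> < c1 / (16 * M1)" using gg unfolding \<gamma>1_def by auto
      then have "M1 * (1 - \<gamma>) < M1 * (c1 / (16 * M1))" using M1(1) by (intro mult_strict_left_mono) auto
      then show ?thesis using M1(1) by simp
    qed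
    have gap: "\<bar>P \<gamma> (x0 + s) e1 - P \<gamma> (x0 + s) z0\<bar> > c1 / 2" if s: "\<bar>s\<bar> < du" for s
    proof -
      have a1: "\<bar>P \<gamma> (x0 + s) p - P 1 (x0 + s) p\<bar> < c1 / 16" for p
        using P_gamma[OF g0(1,3), of "x0 + s" p] gclose by linarith
      have a2: "\<bar>P 1 (x0 + s) p - P 1 x0 p\<bar> \<le> c1 / 16" for p
        by (rule P_cont[of 1 du "c1 / 16"]) (use uc s in auto)
      show ?thesis by (rule tri_gap[OF a1[of e1] a1[of z0] a2[of e1] a2[of z0] c1_def])
    qed
    have "\<exists>p q. digit_seq b p \<and> digit_seq b q \<and> \<bar>P \<gamma> x p - P \<gamma> x q\<bar> > c2"
    proof (rule ccontr)
      assume "\<not> ?thesis"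
      then have Hc: "\<And>p q. digit_seq b p \<Longrightarrow> digit_seq b q \<Longrightarrow> \<bar>P \<gamma> x p - P \<gamma> x q\<bar> \<le> c2"
        by (meson not_less)
      define B :: int where "B = int b ^ M"
      have B0: "B > 0" unfolding B_def using b2 by simp
      have rB: "real_of_int B = real b ^ M" unfolding B_def by simp
      define K where "K = \<lfloor>x0 * real b ^ M - x\<rfloor>"
      define A where "A = nat (K mod B)"
      define t where "t = K div B"
      have A: "A < b ^ M" unfolding A_def B_def using B0 B_def
        by (metis nat_less_iff of_nat_power pos_mod_bound pos_mod_sign)
      have rA: "real A = real_of_int K - real_of_int t * real_of_int B"
      proof -
        have "K mod B = K - t * B" unfolding t_def by (simp add: minus_div_mult_eq_mod)
        moreover have "K mod B \<ge> 0" using B0 by simp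
        ultimately show ?thesis unfolding A_def by simp
      qed
      define y where "y = (x + real A) / real b ^ M"
      define s where "s = (x + real_of_int K) / real b ^ M - x0"
      have bM: "real b ^ M > 0" using bpos by simp
      have ys: "y + real_of_int t = x0 + s" unfolding y_def s_def rA rB using bM
        by (simp add: field_simps)
      have Kb: "real_of_int K \<le> x0 * real b ^ M - x" "x0 * real b ^ M - x < real_of_int K + 1"
        unfolding K_def by linarith+
      have "s \<le> 0" unfolding s_def using Kb bM by (simp add: field_simps)
      moreover have "s > -((1 / real b) ^ M)" unfolding s_def using Kb bM bpos by (simp add: field_simps power_divide)
      ultimately have sdu: "\<bar>s\<bar> < du" using M by linarith
      have pm: "\<bar>P \<gamma> y p - P \<gamma> y q\<bar> \<le> (real b / \<gamma>) ^ M * c2" if "digit_seq b p" "digit_seq b q" for p q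
        unfolding y_def by (rule propM[OF g0(4) g0(3) Hc A that])
      have "(real b / \<gamma>) ^ M \<le> (2 * real b) ^ M"
      proof (rule power_mono)
        have "real b / \<gamma> \<le> real b / (1 / 2)" using ghalf bpos by (intro divide_left_mono) auto
        then show "real b / \<gamma> \<le> 2 * real b" by simp
      qed (use g0 bpos in simp)
      then have "(real b / \<gamma>) ^ M * c2 \<le> (2 * real b) ^ M * c2" using c2 by (intro mult_right_mono) auto
      also have "\<dots> = c1 / 2" unfolding c2_def using bpos by simp
      finally have pm2: "\<bar>P \<gamma> y p - P \<gamma> y q\<bar> \<le> c1 / 2" if "digit_seq b p" "digit_seq b q" for p q
        using pm[OF that] by linarith
      have "P \<gamma> (x0 + s) e1 = P \<gamma> y (sh b t e1)" "P \<gamma> (x0 + s) z0 = P \<gamma> y (sh b t z0)"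
        using P_int[of \<gamma> y t] unfolding ys by auto
      then have "\<bar>P \<gamma> (x0 + s) e1 - P \<gamma> (x0 + s) z0\<bar> \<le> c1 / 2" using pm2[OF sh_digit sh_digit] by simp
      then show False using gap[OF sdu] by simp
    qed
    then obtain p q where p: "digit_seq b p" and q: "digit_seq b q" and pq: "\<bar>P \<gamma> x p - P \<gamma> x q\<bar> > c2"
      by blast
    define k where "k = map p [0..<N]"
    define l where "l = map q [0..<N]"
    have kw: "k \<in> words b N" using p unfolding k_def words_def digit_seq_def by auto
    have lw: "l \<in> words b N" using q unfolding l_def words_def digit_seq_def by auto
    show "E b \<gamma> \<psi> N x \<noteq> words b N \<times> words b N"
    proof
      assume EE: "E b \<gamma> \<psi> N x = words b N \<times> words b N"
      then have "(k, l) \<in> E b \<gamma> \<psi> N x" using kw lw by simp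
      then have "(k, l) \<in> E_eps b \<gamma> \<psi> N x 1 (c2 / 2)" unfolding E_def using c2 by auto
      then obtain u v where u: "digit_seq b u" and v: "digit_seq b v"
        and tg: "tangent b \<gamma> \<psi> 1 (c2 / 2) x (concat_seq k u) (concat_seq l v)"
        unfolding E_eps_def by auto
      have t1: "\<bar>P \<gamma> x (concat_seq k u) - P \<gamma> x (concat_seq l v)\<bar> \<le> c2 / 2"
        using tg unfolding tangent_def S'_eq[OF g0(1,2)] by simp
      have "\<bar>P \<gamma> x (concat_seq k u) - P \<gamma> x p\<bar> \<le> 2 * M1 / real b ^ N"
        by (rule P_prefix[OF g0(1,3)]) (simp add: concat_seq_def k_def)
      moreover have "\<bar>P \<gamma> x (concat_seq l v) - P \<gamma> x q\<bar> \<le> 2 * M1 / real b ^ N"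
        by (rule P_prefix[OF g0(1,3)]) (simp add: concat_seq_def l_def)
      ultimately show False using t1 pq NB by linarith
    qed
  qed
qed

end



theorem lemma2p7:
  fixes b :: nat and \<psi> :: "real \<Rightarrow> real"
  assumes "b \<ge> 2"
    and "\<And>x. \<psi> (x + 1) = \<psi> x"
    and "\<And>x. \<psi> differentiable at x"
    and "continuous_on UNIV (deriv \<psi>)"
    and "\<not> cohomologous_to_zero b \<psi>"
    and "integral {0..1} \<psi> = 0"
  shows "\<exists>\<gamma>1 \<in> {0<..<1}. \<exists>N::nat. N > 0 \<and>
           (\<forall>\<gamma>. \<gamma>1 < \<gamma> \<and> \<gamma> < 1 \<and> \<gamma> > 1 / real b \<longrightarrow>
              (\<forall>x. E b \<gamma> \<psi> N x \<noteq> words b N \<times> words b N))"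
proof -
  interpret wctx b \<psi> using assms(1-4) by unfold_locales
  obtain x0 where "Pg b 1 (deriv \<psi>) x0 (\<lambda>n. if n = 0 then 1 else 0) \<noteq> Pg b 1 (deriv \<psi>) x0 (\<lambda>_. 0)"
    using step1[OF assms(6) assms(5)] by blast
  then show ?thesis by (rule main)
qed

end
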